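(* Let $K\ge2$ and let $\mathscr{M}_K\subseteq\mathscr{S}_K$ be closed with at least two elements. Then $$4\,\kappa(\{\{1,\dots,K\}\},\mathscr{M}_K)\ge\mathrm{diam}^2(\mathscr{M}_K):=\max\{\|\nu-\gamma\|^2:\nu,\gamma\in\mathscr{M}_K\}.$$
   Context: $\mathscr{S}_K=\{\delta\in[0,1]^K:\sum_i\delta_i=1\}$; $\|\cdot\|$ Euclidean norm; $e_j(K)$ the $j$-th standard basis vector of $\mathbb{R}^K$. For a partition $\mathcal{H}=\{\mathcal{H}_1,\dots,\mathcal{H}_l\}$ of $\{1,\dots,K\}$, let $B_i$ be the $K\times|\mathcal{H}_i|$ matrix with columns $e_j(K)$, $j\in\mathcal{H}_i$, and define $$\kappa(\mathcal{H},\mathscr{M}_K)=\sup\Big\{\Big[\max_{\delta\in\mathscr{M}_K}v'\delta-\sup_{\delta\in\mathscr{T}}v'\delta\Big]\wedge\min_{i=1,\dots,l}\Big[\max_{\delta\in\mathscr{M}_K}(v+B_iw_i)'\delta-\sup_{\delta\in\mathscr{M}_K\setminus\mathscr{T}}(v+B_iw_i)'\delta\Big]\Big\},$$ the supremum over all nonempty Borel sets $\mathscr{T}\subsetneq\mathscr{M}_K$, all $v\in[-1,1]^K$ and all $w_i\in[-1,1]^{|\mathcal{H}_i|}$, $i=1,\dots,l$. *)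

theory Defs
  imports "HOL-Analysis.Analysis"
begin

text \<open>Coordinates are indexed by a finite type 'n with CARD('n) = K.\<close>

definition prob_simplex :: "(real^'n::finite) set" where
  "prob_simplex = {\<delta>. (\<forall>i. 0 \<le> \<delta>$i \<and> \<delta>$i \<le> 1) \<and> (\<Sum>i\<in>UNIV. \<delta>$i) = 1}"

text \<open>B_i w_i: embed the block vector w_i (given as a function on the block Hi)
  into R^K, zero outside the block.\<close>
definition blockvec :: "'n set \<Rightarrow> ('n \<Rightarrow> real) \<Rightarrow> real^'n::finite" where
  "blockvec Hi w = (\<chi> j. if j \<in> Hi then w j else 0)"

definition is_partition :: "('n::finite) set set \<Rightarrow> bool" where
  "is_partition H \<longleftrightarrow> (\<forall>Hi\<in>H. Hi \<noteq> {}) \<and> \<Union>H = UNIV \<and>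
     (\<forall>A\<in>H. \<forall>B\<in>H. A \<noteq> B \<longrightarrow> A \<inter> B = {})"

definition kappa :: "('n::finite) set set \<Rightarrow> (real^'n) set \<Rightarrow> real" where
  "kappa H M = Sup {min
       (Sup ((\<lambda>\<delta>. v \<bullet> \<delta>) ` M) - Sup ((\<lambda>\<delta>. v \<bullet> \<delta>) ` T))
       (Min ((\<lambda>Hi. Sup ((\<lambda>\<delta>. (v + blockvec Hi (W Hi)) \<bullet> \<delta>) ` M)
                    - Sup ((\<lambda>\<delta>. (v + blockvec Hi (W Hi)) \<bullet> \<delta>) ` (M - T))) ` H))
     | T v W. T \<noteq> {} \<and> T \<subset> M \<and> T \<in> sets borel \<and> (\<forall>j. \<bar>v$j\<bar> \<le> 1) \<and>
              (\<forall>Hi\<in>H. \<forall>j\<in>Hi. \<bar>W Hi j\<bar> \<le> 1)}"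

definition diam2 :: "(real^'n::finite) set \<Rightarrow> real" where
  "diam2 M = Sup {(norm (\<nu> - \<gamma>))\<^sup>2 | \<nu> \<gamma>. \<nu> \<in> M \<and> \<gamma> \<in> M}"

end

theory Submission
  imports Defs
begin

lemma abs_inner_simplex:
  fixes u d :: "real^'n::finite"
  assumes "d \<in> prob_simplex" "\<forall>j. \<bar>u$j\<bar> \<le> 1"
  shows "\<bar>u \<bullet> d\<bar> \<le> 1"
proof -
  have d: "\<forall>i. 0 \<le> d$i \<and> d$i \<le> 1" "(\<Sum>i\<in>UNIV. d$i) = 1"
    using assms(1) unfolding prob_simplex_def by auto
  have "\<bar>u \<bullet> d\<bar> = \<bar>\<Sum>i\<in>UNIV. u$i * d$i\<bar>" by (simp add: inner_vec_def)
  also have "\<dots> \<le> (\<Sum>i\<in>UNIV. \<bar>u$i * d$i\<bar>)" by (rule sum_abs)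
  also have "\<dots> \<le> (\<Sum>i\<in>UNIV. d$i)"
  proof (rule sum_mono)
    fix i :: 'n
    have "\<bar>u$i * d$i\<bar> = \<bar>u$i\<bar> * d$i" using d(1) by (simp add: abs_mult)
    also have "\<dots> \<le> 1 * d$i" using d(1) assms(2) by (intro mult_right_mono) auto
    finally show "\<bar>u$i * d$i\<bar> \<le> d$i" by simp
  qed
  finally show ?thesis using d(2) by simp
qed

lemma bdd_lin:
  fixes u :: "real^'n::finite"
  assumes "S \<subseteq> prob_simplex" "\<forall>j. \<bar>u$j\<bar> \<le> 1"
  shows "bdd_above ((\<lambda>\<delta>. u \<bullet> \<delta>) ` S)"
  using abs_inner_simplex[OF _ assms(2)] assms(1)
  by (intro bdd_aboveI[where M=1]) (auto simp: abs_le_iff)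

lemma kappa_bdd:
  fixes M :: "(real^'n::finite) set"
  assumes "M \<subseteq> prob_simplex" "M \<noteq> {}"
  shows "bdd_above {min
       (Sup ((\<lambda>\<delta>. v \<bullet> \<delta>) ` M) - Sup ((\<lambda>\<delta>. v \<bullet> \<delta>) ` T))
       (Min ((\<lambda>Hi. Sup ((\<lambda>\<delta>. (v + blockvec Hi (W Hi)) \<bullet> \<delta>) ` M)
                    - Sup ((\<lambda>\<delta>. (v + blockvec Hi (W Hi)) \<bullet> \<delta>) ` (M - T))) ` H))
     | T v W. T \<noteq> {} \<and> T \<subset> M \<and> T \<in> sets borel \<and> (\<forall>j. \<bar>v$j\<bar> \<le> 1) \<and>
              (\<forall>Hi\<in>H. \<forall>j\<in>Hi. \<bar>W Hi j\<bar> \<le> 1)}" (is "bdd_above ?S")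
proof (rule bdd_aboveI[where M=2])
  fix x assume "x \<in> ?S"
  then obtain T :: "(real^'n) set" and v :: "real^'n" and W :: "'n set \<Rightarrow> 'n \<Rightarrow> real"
  where xd: "x = min
       (Sup ((\<lambda>\<delta>. v \<bullet> \<delta>) ` M) - Sup ((\<lambda>\<delta>. v \<bullet> \<delta>) ` T))
       (Min ((\<lambda>Hi. Sup ((\<lambda>\<delta>. (v + blockvec Hi (W Hi)) \<bullet> \<delta>) ` M)
                    - Sup ((\<lambda>\<delta>. (v + blockvec Hi (W Hi)) \<bullet> \<delta>) ` (M - T))) ` H))"
   and T: "T \<noteq> {}" "T \<subset> M" and v: "\<forall>j. \<bar>v$j\<bar> \<le> 1" by blast
  have s1: "Sup ((\<lambda>\<delta>. v \<bullet> \<delta>) ` M) \<le> 1"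
    using assms abs_inner_simplex[OF _ v]
    by (intro cSup_least) (auto simp: abs_le_iff)
  obtain t where t: "t \<in> T" using T by auto
  have tS: "t \<in> prob_simplex" using t T assms by auto
  have "v \<bullet> t \<le> Sup ((\<lambda>\<delta>. v \<bullet> \<delta>) ` T)"
    using t T assms by (intro cSup_upper bdd_lin[OF _ v]) auto
  moreover have "-1 \<le> v \<bullet> t" using abs_inner_simplex[OF tS v] by (auto simp: abs_le_iff)
  ultimately have "Sup ((\<lambda>\<delta>. v \<bullet> \<delta>) ` M) - Sup ((\<lambda>\<delta>. v \<bullet> \<delta>) ` T) \<le> 2"
    using s1 by linarith
  thus "x \<le> 2" unfolding xd by linarith
qed

lemma key:
  fixes M :: "(real^'n::finite) set"
  assumes "closed M" and MS: "M \<subseteq> prob_simplex" and nu: "\<nu> \<in> M" and ga: "\<gamma> \<in> M"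
    and ne: "\<nu> \<noteq> \<gamma>"
  shows "(norm (\<nu> - \<gamma>))\<^sup>2 \<le> 4 * kappa {UNIV} M"
proof -
  define v where "v = (1/2) *\<^sub>R (\<nu> - \<gamma>)"
  define W where "W = (\<lambda>(_::'n set) j. - ((\<nu> - \<gamma>)$j))"
  define m where "m = (v \<bullet> \<nu> + v \<bullet> \<gamma>) / 2"
  define T where "T = M \<inter> {\<delta>. v \<bullet> \<delta> \<le> m}"
  define D where "D = (norm (\<nu> - \<gamma>))\<^sup>2"
  have Dpos: "D > 0" using ne by (simp add: D_def)
  have vd: "v \<bullet> \<nu> - v \<bullet> \<gamma> = D / 2"
    by (simp add: v_def D_def inner_diff_right[symmetric] power2_norm_eq_inner)
  have nuS: "\<nu> \<in> prob_simplex" and gaS: "\<gamma> \<in> prob_simplex" using nu ga MS by auto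
  have comp: "\<bar>(\<nu> - \<gamma>)$j\<bar> \<le> 1" for j
  proof -
    have "0 \<le> \<nu>$j" "\<nu>$j \<le> 1" "0 \<le> \<gamma>$j" "\<gamma>$j \<le> 1"
      using nuS gaS unfolding prob_simplex_def by auto
    thus ?thesis by (simp add: abs_le_iff)
  qed
  have v1: "\<forall>j. \<bar>v$j\<bar> \<le> 1" using comp by (auto simp: v_def abs_le_iff) (smt (verit) comp abs_le_iff)+
  have mv1: "\<forall>j. \<bar>(-v)$j\<bar> \<le> 1" using v1 by simp
  have bv: "v + blockvec UNIV (W UNIV) = - v"
    by (simp add: blockvec_def W_def v_def vec_eq_iff field_simps)
  have Tne: "T \<noteq> {}" using ga vd Dpos by (auto simp: T_def m_def)
  have nuT: "\<nu> \<notin> T" using vd Dpos by (auto simp: T_def m_def)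
  have Tsub: "T \<subset> M" using nu nuT by (auto simp: T_def)
  have Tb: "T \<in> sets borel" unfolding T_def
    using assms(1) by (intro borel_closed closed_Int closed_halfspace_le)
  have W1: "\<forall>Hi\<in>{UNIV}. \<forall>j\<in>Hi. \<bar>W Hi j\<bar> \<le> 1" using comp by (simp add: W_def abs_minus_commute)
  define e where "e = min
       (Sup ((\<lambda>\<delta>. v \<bullet> \<delta>) ` M) - Sup ((\<lambda>\<delta>. v \<bullet> \<delta>) ` T))
       (Min ((\<lambda>Hi. Sup ((\<lambda>\<delta>. (v + blockvec Hi (W Hi)) \<bullet> \<delta>) ` M)
                    - Sup ((\<lambda>\<delta>. (v + blockvec Hi (W Hi)) \<bullet> \<delta>) ` (M - T))) ` {UNIV}))"
  have "e \<le> kappa {UNIV} M"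
    unfolding kappa_def e_def
    apply (rule cSup_upper)
     apply (rule CollectI)
     apply (rule exI[of _ T], rule exI[of _ v], rule exI[of _ W])
    using Tne Tsub Tb v1 W1 apply blast
    apply (rule kappa_bdd[OF MS]) using nu by auto
  moreover have "D / 4 \<le> e"
  proof -
    have a1: "v \<bullet> \<nu> \<le> Sup ((\<lambda>\<delta>. v \<bullet> \<delta>) ` M)"
      using nu by (intro cSup_upper bdd_lin[OF MS v1]) auto
    have a2: "Sup ((\<lambda>\<delta>. v \<bullet> \<delta>) ` T) \<le> m"
      using Tne by (intro cSup_least) (auto simp: T_def)
    have b1: "(-v) \<bullet> \<gamma> \<le> Sup ((\<lambda>\<delta>. (-v) \<bullet> \<delta>) ` M)"
      using ga by (intro cSup_upper bdd_lin[OF MS mv1]) auto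
    have b2: "Sup ((\<lambda>\<delta>. (-v) \<bullet> \<delta>) ` (M - T)) \<le> - m"
      using nu nuT by (intro cSup_least) (auto simp: T_def)
    show ?thesis unfolding e_def using a1 a2 b1 b2 vd
      by (simp add: m_def bv field_simps)
  qed
  ultimately show ?thesis unfolding D_def by linarith
qed

theorem lemmaB1:
  fixes M :: "(real^'n::finite) set"
  assumes "CARD('n) \<ge> 2"
    and "closed M" and "M \<subseteq> prob_simplex"
    and "\<exists>\<nu>\<in>M. \<exists>\<gamma>\<in>M. \<nu> \<noteq> \<gamma>"
  shows "4 * kappa {UNIV} M \<ge> diam2 M"
proof -
  obtain a b where ab: "a \<in> M" "b \<in> M" "a \<noteq> b" using assms(4) by auto
  have k0: "0 \<le> 4 * kappa {UNIV} M"
    using key[OF assms(2,3) ab] by (smt (verit) zero_le_power2)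
  show ?thesis unfolding diam2_def
  proof (rule cSup_least)
    show "{(norm (\<nu> - \<gamma>))\<^sup>2 | \<nu> \<gamma>. \<nu> \<in> M \<and> \<gamma> \<in> M} \<noteq> {}" using ab by auto
  next
    fix x assume "x \<in> {(norm (\<nu> - \<gamma>))\<^sup>2 | \<nu> \<gamma>. \<nu> \<in> M \<and> \<gamma> \<in> M}"
    then obtain n g where x: "x = (norm (n - g))\<^sup>2" "n \<in> M" "g \<in> M" by auto
    show "x \<le> 4 * kappa {UNIV} M"
    proof (cases "n = g")
      case True thus ?thesis using x k0 by simp
    next
      case False thus ?thesis using x key[OF assms(2,3) x(2,3)] by simp
    qed
  qed
qed

end
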